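(* Let $p$ be a probability density on $\mathbb{R}$ such that the additive noise mechanism $f\mapsto f(D)+Z$, $Z\sim p$, satisfies $(\alpha,\epsilon_g(\alpha))$-RDP for every scalar function $f$ of global sensitivity $2$. Consider Report-Noisy-Max on the gaps $C_j(D)=h_{(j)}(D)-h_{(j+1)}(D)$, i.e. the mechanism $\mathcal{M}(D)=\operatorname{argmax}_{j}\{C_j(D)+Z_j\}$ where the $Z_j$ are i.i.d. with density $p$ (the same noise distribution on every coordinate). Then for all neighboring datasets $D,D'$ and all $\alpha>1$, $$\mathbb{D}_\alpha(\mathcal{M}(D)\|\mathcal{M}(D'))\le\epsilon_g(\alpha)+\frac{\log m}{\alpha-1}.$$
   Context: Setting: a dataset consists of users; there are $m$ candidates and each user votes $1$ for an arbitrary subset of candidates; $h_j(D)$ is the number of users voting for candidate $j$. Datasets are neighboring if one is obtained from the other by adding or removing one user. $h_{(1)}\ge\dots\ge h_{(m)}$ are the sorted counts. The Rényi divergence of order $\alpha>1$ is $\mathbb{D}_\alpha(P\|Q)=\frac{1}{\alpha-1}\log\mathbb{E}_{o\sim Q}[(P(o)/Q(o))^\alpha]$; a mechanism is $(\alpha,\epsilon(\alpha))$-RDP for a function class if this divergence between outputs on neighboring inputs is at most $\epsilon(\alpha)$. *)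

theory Defs
  imports "HOL-Probability.Probability"
begin

text \<open>A dataset is a multiset of users; each user is represented by the set of
candidates (out of the candidates 0,...,m-1) that the user votes for.\<close>

type_synonym dataset = "nat set multiset"

definition valid_dataset :: "nat \<Rightarrow> dataset \<Rightarrow> bool" where
  "valid_dataset m D \<longleftrightarrow> (\<forall>S\<in>#D. S \<subseteq> {..<m})"

definition neighboring :: "nat \<Rightarrow> dataset \<Rightarrow> dataset \<Rightarrow> bool" where
  "neighboring m D D' \<longleftrightarrow> valid_dataset m D \<and> valid_dataset m D' \<and>
     (\<exists>S. D' = D + {#S#} \<or> D = D' + {#S#})"

definition sensitivity_le :: "nat \<Rightarrow> (dataset \<Rightarrow> real) \<Rightarrow> real \<Rightarrow> bool" where
  "sensitivity_le m f s \<longleftrightarrow> (\<forall>D D'. neighboring m D D' \<longrightarrow> \<bar>f D - f D'\<bar> \<le> s)"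

definition hcount :: "dataset \<Rightarrow> nat \<Rightarrow> nat" where
  "hcount D j = size (filter_mset (\<lambda>S. j \<in> S) D)"

text \<open>Counts sorted in non-increasing order; entry i (0-based) is h_(i+1).\<close>
definition sorted_counts :: "nat \<Rightarrow> dataset \<Rightarrow> nat list" where
  "sorted_counts m D = rev (sort (map (hcount D) [0..<m]))"

text \<open>Gap i (0-based, i < m-1) is C_(i+1)(D) = h_(i+1)(D) - h_(i+2)(D).\<close>
definition gap :: "nat \<Rightarrow> dataset \<Rightarrow> nat \<Rightarrow> real" where
  "gap m D i = real (sorted_counts m D ! i) - real (sorted_counts m D ! (i + 1))"

definition renyi_term :: "real \<Rightarrow> real \<Rightarrow> real \<Rightarrow> ennreal" where
  "renyi_term \<alpha> x y =
     (if y = 0 then (if x = 0 then 0 else \<infinity>) else ennreal (y * (x / y) powr \<alpha>))"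

definition renyi_of_moment :: "real \<Rightarrow> ennreal \<Rightarrow> ereal" where
  "renyi_of_moment \<alpha> M =
     (if M = \<infinity> then \<infinity> else if M = 0 then -\<infinity>
      else ereal (ln (enn2real M) / (\<alpha> - 1)))"

definition renyi_div_dens :: "real \<Rightarrow> (real \<Rightarrow> real) \<Rightarrow> (real \<Rightarrow> real) \<Rightarrow> ereal" where
  "renyi_div_dens \<alpha> P Q = renyi_of_moment \<alpha> (\<integral>\<^sup>+ x. renyi_term \<alpha> (P x) (Q x) \<partial>lborel)"

definition renyi_div_disc :: "real \<Rightarrow> nat \<Rightarrow> (nat \<Rightarrow> real) \<Rightarrow> (nat \<Rightarrow> real) \<Rightarrow> ereal" where
  "renyi_div_disc \<alpha> k P Q = renyi_of_moment \<alpha> (\<Sum>j<k. renyi_term \<alpha> (P j) (Q j))"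

definition additive_out_density :: "(real \<Rightarrow> real) \<Rightarrow> (dataset \<Rightarrow> real) \<Rightarrow> dataset \<Rightarrow> real \<Rightarrow> real" where
  "additive_out_density p f D = (\<lambda>x. p (x - f D))"

text \<open>Argmax over indices 0..<k (ties broken towards the least index; ties have
  probability zero for continuous noise).\<close>
definition argmax_idx :: "nat \<Rightarrow> (nat \<Rightarrow> real) \<Rightarrow> nat" where
  "argmax_idx k v = (LEAST j. j < k \<and> (\<forall>i<k. v i \<le> v j))"

definition noise :: "nat \<Rightarrow> (real \<Rightarrow> real) \<Rightarrow> (nat \<Rightarrow> real) measure" where
  "noise k p = PiM {..<k} (\<lambda>_. density lborel (\<lambda>x. ennreal (p x)))"

definition rnm_gap_prob :: "nat \<Rightarrow> (real \<Rightarrow> real) \<Rightarrow> dataset \<Rightarrow> nat \<Rightarrow> real" where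
  "rnm_gap_prob m p D j =
     measure (noise (m - 1) p)
       {z \<in> space (noise (m - 1) p). argmax_idx (m - 1) (\<lambda>i. gap m D i + z i) = j}"

end

theory Submission
  imports Defs
begin

lemma tangent_ineq:
  fixes a r t :: real
  assumes a: "a > 1" and r: "r > 0" and t: "t \<ge> 0"
  shows "a * r powr (a - 1) * t \<le> t powr a + (a - 1) * r powr a"
proof (cases "t = 0")
  case True
  then show ?thesis using a r by simp
next
  case False
  then have tp: "t > 0" using t by simp
  have "(t powr a) powr (1/a) * (r powr a) powr ((a-1)/a) \<le> (1/a) * t powr a + ((a-1)/a) * r powr a"
    using Youngs_inequality_0[of "1/a" "(a-1)/a" "t powr a" "r powr a"] a r tp
    by (simp add: field_simps)
  moreover have "(t powr a) powr (1/a) = t" using a tp by (simp add: powr_powr)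
  moreover have "(r powr a) powr ((a-1)/a) = r powr (a - 1)" using a r by (simp add: powr_powr)
  ultimately have "t * r powr (a - 1) \<le> (1/a) * t powr a + ((a-1)/a) * r powr a" by simp
  then have "a * (t * r powr (a - 1)) \<le> a * ((1/a) * t powr a + ((a-1)/a) * r powr a)"
    using a by (intro mult_left_mono) auto
  moreover have "a * ((1/a) * t powr a + ((a-1)/a) * r powr a) = t powr a + (a - 1) * r powr a"
    using a by (simp add: field_simps)
  ultimately show ?thesis by (simp add: mult.commute mult.left_commute)
qed

lemma renyi_term_tangent:
  fixes a r x y :: real
  assumes a: "a > 1" and r: "r > 0" and x: "x \<ge> 0" and y: "y \<ge> 0"
  shows "ennreal (a * r powr (a - 1) * x) \<le> renyi_term a x y + ennreal ((a - 1) * r powr a * y)"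
proof (cases "y = 0")
  case True
  then show ?thesis using x by (cases "x = 0") (auto simp: renyi_term_def)
next
  case False
  then have yp: "y > 0" using y by simp
  have "a * r powr (a - 1) * (x / y) \<le> (x/y) powr a + (a - 1) * r powr a"
    using tangent_ineq[OF a r, of "x/y"] x yp by simp
  then have "y * (a * r powr (a - 1) * (x / y)) \<le> y * ((x/y) powr a + (a - 1) * r powr a)"
    using yp by (intro mult_left_mono) auto
  then have "a * r powr (a - 1) * x \<le> y * (x/y) powr a + (a - 1) * r powr a * y"
    using yp by (simp add: field_simps)
  then have "ennreal (a * r powr (a - 1) * x) \<le> ennreal (y * (x/y) powr a + (a - 1) * r powr a * y)"
    by (rule ennreal_leI)
  also have "\<dots> = ennreal (y * (x/y) powr a) + ennreal ((a - 1) * r powr a * y)"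
    using a yp by (intro ennreal_plus) auto
  finally show ?thesis using yp by (simp add: renyi_term_def)
qed

lemma renyi_term_mono:
  fixes a x x' y y' :: real
  assumes a: "a > 1" and "0 \<le> x" "x \<le> x'" "0 \<le> y'" "y' \<le> y"
  shows "renyi_term a x y \<le> renyi_term a x' y'"
proof -
  consider "y = 0" | "y > 0" "y' = 0" | "y' > 0" using assms by linarith
  then show ?thesis
  proof cases
    case 1
    then show ?thesis using assms by (auto simp: renyi_term_def)
  next
    case 2
    then show ?thesis using assms by (auto simp: renyi_term_def)
  next
    case 3
    have yp: "y > 0" using 3 assms by linarith
    have e1: "y * (x/y) powr a = x powr a * y powr (1 - a)"
      using yp assms by (simp add: powr_divide powr_diff field_simps)
    have e2: "y' * (x'/y') powr a = x' powr a * y' powr (1 - a)"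
      using 3 assms by (simp add: powr_divide powr_diff field_simps)
    have "x powr a * y powr (1 - a) \<le> x' powr a * y' powr (1 - a)"
      using assms 3 by (intro mult_mono powr_mono2 powr_mono2') auto
    then show ?thesis using yp 3 e1 e2 by (simp add: renyi_term_def ennreal_leI)
  qed
qed

lemma renyi_term_measurable[measurable]:
  assumes [measurable]: "f \<in> borel_measurable M" "g \<in> borel_measurable M"
  shows "(\<lambda>x. renyi_term a (f x) (g x)) \<in> borel_measurable M"
  unfolding renyi_term_def by measurable

lemma renyi_key:
  fixes f g :: "'a \<Rightarrow> real"
  assumes a: "a > 1" and r: "r > 0"
    and [measurable]: "f \<in> borel_measurable M" "g \<in> borel_measurable M"
    and f0: "\<And>x. f x \<ge> 0" and g0: "\<And>x. g x \<ge> 0"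
  shows "ennreal (a * r powr (a - 1)) * (\<integral>\<^sup>+x. f x \<partial>M)
     \<le> (\<integral>\<^sup>+x. renyi_term a (f x) (g x) \<partial>M) + ennreal ((a - 1) * r powr a) * (\<integral>\<^sup>+x. g x \<partial>M)"
proof -
  have "ennreal (a * r powr (a - 1)) * (\<integral>\<^sup>+x. f x \<partial>M) = (\<integral>\<^sup>+x. ennreal (a * r powr (a - 1) * f x) \<partial>M)"
    using a r f0 by (subst nn_integral_cmult[symmetric]) (auto simp: ennreal_mult)
  also have "\<dots> \<le> (\<integral>\<^sup>+x. renyi_term a (f x) (g x) + ennreal ((a - 1) * r powr a * g x) \<partial>M)"
    by (intro nn_integral_mono renyi_term_tangent a r f0 g0)
  also have "\<dots> = (\<integral>\<^sup>+x. renyi_term a (f x) (g x) \<partial>M) + (\<integral>\<^sup>+x. ennreal ((a - 1) * r powr a * g x) \<partial>M)"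
    by (intro nn_integral_add) auto
  also have "(\<integral>\<^sup>+x. ennreal ((a - 1) * r powr a * g x) \<partial>M) = ennreal ((a - 1) * r powr a) * (\<integral>\<^sup>+x. g x \<partial>M)"
    using a r g0 by (subst nn_integral_cmult[symmetric]) (auto simp: ennreal_mult)
  finally show ?thesis .
qed

lemma renyi_integral_lower:
  fixes f g :: "'a \<Rightarrow> real"
  assumes a: "a > 1"
    and [measurable]: "f \<in> borel_measurable M" "g \<in> borel_measurable M"
    and f0: "\<And>x. f x \<ge> 0" and g0: "\<And>x. g x \<ge> 0"
    and fin: "(\<integral>\<^sup>+x. f x \<partial>M) < \<infinity>" "(\<integral>\<^sup>+x. g x \<partial>M) < \<infinity>"
  shows "renyi_term a (enn2real (\<integral>\<^sup>+x. f x \<partial>M)) (enn2real (\<integral>\<^sup>+x. g x \<partial>M))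
     \<le> (\<integral>\<^sup>+x. renyi_term a (f x) (g x) \<partial>M)"
proof -
  define A where "A = enn2real (\<integral>\<^sup>+x. f x \<partial>M)"
  define B where "B = enn2real (\<integral>\<^sup>+x. g x \<partial>M)"
  define R where "R = (\<integral>\<^sup>+x. renyi_term a (f x) (g x) \<partial>M)"
  have IA: "(\<integral>\<^sup>+x. f x \<partial>M) = ennreal A" using fin unfolding A_def
    by (simp add: ennreal_enn2real_if less_top)
  have IB: "(\<integral>\<^sup>+x. g x \<partial>M) = ennreal B" using fin unfolding B_def
    by (simp add: ennreal_enn2real_if less_top)
  have A0: "A \<ge> 0" and B0: "B \<ge> 0" unfolding A_def B_def by auto
  have key: "ennreal (a * r powr (a - 1)) * ennreal A \<le> R + ennreal ((a - 1) * r powr a) * ennreal B"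
    if "r > 0" for r
    using renyi_key[OF a that, of f M g] f0 g0 IA IB unfolding R_def by simp
  show ?thesis
  proof (cases "R = \<infinity>")
    case True
    then show ?thesis unfolding R_def by simp
  next
    case False
    then obtain R0 where R0: "R = ennreal R0" "R0 \<ge> 0"
      by (cases R) auto
    have keyr: "a * r powr (a - 1) * A \<le> R0 + (a - 1) * r powr a * B" if "r > 0" for r
    proof -
      have c1: "a * r powr (a - 1) \<ge> 0" "(a - 1) * r powr a \<ge> 0" using a that by auto
      have e1: "ennreal (a * r powr (a - 1)) * ennreal A = ennreal (a * r powr (a - 1) * A)"
        using c1 A0 by (simp add: ennreal_mult)
      have e2: "ennreal R0 + ennreal ((a - 1) * r powr a) * ennreal B = ennreal (R0 + (a - 1) * r powr a * B)"
        using c1 B0 R0 by (simp add: ennreal_mult ennreal_plus)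
      have "ennreal (a * r powr (a - 1) * A) \<le> ennreal (R0 + (a - 1) * r powr a * B)"
        using key[OF that] unfolding R0(1) e1 e2 .
      then show ?thesis using R0 a that B0
        by (subst (asm) ennreal_le_iff) auto
    qed
    consider "A = 0" | "A > 0" "B = 0" | "A > 0" "B > 0" using A0 B0 by linarith
    then show ?thesis
    proof cases
      case 1
      then show ?thesis by (simp add: renyi_term_def A_def[symmetric] B_def[symmetric])
    next
      case 2
      define r where "r = (R0 / (a * A) + 1) powr (1 / (a - 1))"
      have q0: "R0 / (a * A) \<ge> 0" using R0 2 a by simp
      have rp: "r > 0" unfolding r_def using q0 by simp
      have "r powr (a - 1) = R0 / (a * A) + 1" unfolding r_def using q0 a
        by (simp add: powr_powr)
      then have "a * r powr (a - 1) * A = R0 + a * A" using 2 a by (simp add: field_simps)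
      moreover have "a * A > 0" using 2 a by simp
      moreover have "a * r powr (a - 1) * A \<le> R0" using keyr[OF rp] 2 by simp
      ultimately have False by linarith
      then show ?thesis ..
    next
      case 3
      define r where "r = A / B"
      have rp: "r > 0" using 3 unfolding r_def by simp
      have "r powr (a - 1) * A = B * r powr a"
        unfolding r_def using 3 a by (simp add: powr_diff field_simps)
      then have "a * r powr (a - 1) * A - (a - 1) * r powr a * B = B * r powr a"
        by (simp add: algebra_simps)
      then have "B * r powr a \<le> R0" using keyr[OF rp] by linarith
      then have "renyi_term a A B \<le> R" using 3 R0 unfolding r_def
        by (simp add: renyi_term_def ennreal_leI)
      then show ?thesis unfolding A_def B_def R_def .
    qed
  qed
qed

lemma sorted_nth_le_count:
  fixes zs :: "nat list"
  assumes "sorted zs" "k < length zs" "zs ! k \<le> t"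
  shows "Suc k \<le> length (filter (\<lambda>x. x \<le> t) zs)"
proof -
  have all: "\<forall>x\<in>set (take (Suc k) zs). x \<le> t"
  proof
    fix x assume "x \<in> set (take (Suc k) zs)"
    then obtain i where i: "i < length (take (Suc k) zs)" "x = take (Suc k) zs ! i"
      by (auto simp: in_set_conv_nth)
    then have "i \<le> k" "x = zs ! i" by auto
    then have "x \<le> zs ! k" using assms sorted_nth_mono by blast
    then show "x \<le> t" using assms by simp
  qed
  have "length (filter (\<lambda>x. x \<le> t) zs) = length (filter (\<lambda>x. x \<le> t) (take (Suc k) zs)) + length (filter (\<lambda>x. x \<le> t) (drop (Suc k) zs))"
    by (metis filter_append length_append append_take_drop_id)
  moreover have "filter (\<lambda>x. x \<le> t) (take (Suc k) zs) = take (Suc k) zs" using all by simp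
  moreover have "length (take (Suc k) zs) = Suc k" using assms by simp
  ultimately show ?thesis by simp
qed

lemma count_le_sorted_nth:
  fixes zs :: "nat list"
  assumes "sorted zs" "k < length zs" "Suc k \<le> length (filter (\<lambda>x. x \<le> t) zs)"
  shows "zs ! k \<le> t"
proof (rule ccontr)
  assume "\<not> zs ! k \<le> t"
  then have gt: "zs ! k > t" by simp
  have all: "\<forall>x\<in>set (drop k zs). \<not> x \<le> t"
  proof
    fix x assume "x \<in> set (drop k zs)"
    then obtain i where i: "i < length (drop k zs)" "x = drop k zs ! i"
      by (auto simp: in_set_conv_nth)
    then have xe: "x = zs ! (k + i)" and kl: "k + i < length zs" by auto
    have "zs ! k \<le> zs ! (k + i)" using sorted_nth_mono[OF assms(1) _ kl] by simp
    then show "\<not> x \<le> t" using gt xe by simp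
  qed
  have "length (filter (\<lambda>x. x \<le> t) zs) = length (filter (\<lambda>x. x \<le> t) (take k zs)) + length (filter (\<lambda>x. x \<le> t) (drop k zs))"
    by (metis filter_append length_append append_take_drop_id)
  moreover have "filter (\<lambda>x. x \<le> t) (drop k zs) = []" using all by (simp add: filter_empty_conv)
  moreover have "length (filter (\<lambda>x. x \<le> t) (take k zs)) \<le> length (take k zs)"
    by (rule length_filter_le)
  moreover have "length (take k zs) = k" using assms(2) by simp
  ultimately have "length (filter (\<lambda>x. x \<le> t) zs) \<le> k" by simp
  then show False using assms(3) by simp
qed

lemma sort_shift:
  fixes xs ys :: "nat list"
  assumes len: "length xs = length ys" and le: "\<And>l. l < length xs \<Longrightarrow> xs ! l \<le> ys ! l + c"
    and k: "k < length xs"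
  shows "sort xs ! k \<le> sort ys ! k + c"
proof -
  define t0 where "t0 = sort ys ! k"
  have "Suc k \<le> length (filter (\<lambda>x. x \<le> t0) (sort ys))"
    using sorted_nth_le_count[of "sort ys" k t0] k len unfolding t0_def by simp
  also have "\<dots> = length (filter (\<lambda>x. x \<le> t0) ys)" by (simp add: filter_sort)
  also have "\<dots> = card {i. i < length ys \<and> ys ! i \<le> t0}" by (simp add: length_filter_conv_card)
  also have "\<dots> \<le> card {i. i < length xs \<and> xs ! i \<le> t0 + c}"
    using len le by (intro card_mono) (auto, fastforce)
  also have "\<dots> = length (filter (\<lambda>x. x \<le> t0 + c) (sort xs))"
    by (simp add: length_filter_conv_card filter_sort)
  finally show ?thesis using count_le_sorted_nth[of "sort xs" k "t0 + c"] k unfolding t0_def by simp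
qed

lemma sorted_counts_shift:
  assumes "\<And>l. hcount D l \<le> hcount D' l + c" "i < m"
  shows "sorted_counts m D ! i \<le> sorted_counts m D' ! i + c"
proof -
  let ?L = "map (hcount D) [0..<m]" and ?L' = "map (hcount D') [0..<m]"
  have "sorted_counts m D ! i = sort ?L ! (m - Suc i)"
    unfolding sorted_counts_def using assms by (simp add: rev_nth)
  moreover have "sorted_counts m D' ! i = sort ?L' ! (m - Suc i)"
    unfolding sorted_counts_def using assms by (simp add: rev_nth)
  moreover have "sort ?L ! (m - Suc i) \<le> sort ?L' ! (m - Suc i) + c"
    using assms by (intro sort_shift) auto
  ultimately show ?thesis by simp
qed

lemma gap_sens_add:
  assumes "D' = D + {#S#}" "Suc i < m"
  shows "\<bar>gap m D i - gap m D' i\<bar> \<le> 1"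
proof -
  have h: "hcount D' l = hcount D l + (if l \<in> S then 1 else 0)" for l
    using assms unfolding hcount_def by simp
  have a: "sorted_counts m D ! j \<le> sorted_counts m D' ! j + 0" if "j < m" for j
    using that by (intro sorted_counts_shift) (auto simp: h)
  have b: "sorted_counts m D' ! j \<le> sorted_counts m D ! j + 1" if "j < m" for j
    using that by (intro sorted_counts_shift) (auto simp: h)
  have i1: "i < m" using assms by simp
  have r1: "real (sorted_counts m D ! i) \<le> real (sorted_counts m D' ! i)"
    using a[OF i1] by simp
  have r2: "real (sorted_counts m D' ! i) \<le> real (sorted_counts m D ! i) + 1"
    using b[OF i1] by (metis of_nat_Suc of_nat_le_iff add.commute plus_1_eq_Suc)
  have r3: "real (sorted_counts m D ! Suc i) \<le> real (sorted_counts m D' ! Suc i)"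
    using a[OF assms(2)] by simp
  have r4: "real (sorted_counts m D' ! Suc i) \<le> real (sorted_counts m D ! Suc i) + 1"
    using b[OF assms(2)] by (metis of_nat_Suc of_nat_le_iff add.commute plus_1_eq_Suc)
  show ?thesis unfolding gap_def abs_le_iff using r1 r2 r3 r4 by simp
qed

lemma gap_sens:
  assumes "neighboring m D D'" "Suc i < m"
  shows "\<bar>gap m D i - gap m D' i\<bar> \<le> 1"
  using assms gap_sens_add[of D' D _ i m] gap_sens_add[of D D' _ i m] unfolding neighboring_def
  by (auto simp: abs_minus_commute)

lemma moment_bound:
  assumes a: "a > 1" and le: "renyi_of_moment a M \<le> ereal e"
  shows "M \<le> ennreal (exp ((a - 1) * e))"
proof (cases "M = \<infinity> \<or> M = 0")
  case True
  then show ?thesis using le by (auto simp: renyi_of_moment_def)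
next
  case False
  obtain r where r0: "M = ennreal r" "r \<ge> 0"
    using False by (cases M rule: ennreal_cases) auto
  then have r: "M = ennreal r" "r > 0" using False by auto
  then have "ln r / (a - 1) \<le> e" using le False by (simp add: renyi_of_moment_def)
  then have "ln r \<le> (a - 1) * e" using a by (simp add: divide_le_eq mult.commute)
  then have "r \<le> exp ((a - 1) * e)" using r by (metis exp_ln exp_le_cancel_iff)
  then show ?thesis using r by (simp add: ennreal_leI)
qed

lemma moment_final:
  assumes a: "a > 1" and k: "real k \<le> real m" and le: "S \<le> ennreal (real k * exp ((a - 1) * e))"
  shows "renyi_of_moment a S \<le> ereal (e + ln (real m) / (a - 1))"
proof (cases "S = 0")
  case True
  then show ?thesis by (simp add: renyi_of_moment_def)
next
  case False
  have "S \<noteq> \<infinity>" using le by (auto simp: top_unique)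
  obtain r where r0: "S = ennreal r" "r \<ge> 0"
    using \<open>S \<noteq> \<infinity>\<close> by (cases S rule: ennreal_cases) auto
  then have r: "S = ennreal r" "r > 0" using False by auto
  have "ennreal r \<le> ennreal (real k * exp ((a - 1) * e))" using le r by simp
  then have rk: "r \<le> real k * exp ((a - 1) * e)"
    using ennreal_le_iff[of "real k * exp ((a - 1) * e)" r] by simp
  have kp: "real k > 0"
  proof (rule ccontr)
    assume "\<not> real k > 0"
    then have "real k = 0" by simp
    then show False using rk r by simp
  qed
  have "real k * exp ((a - 1) * e) \<le> real m * exp ((a - 1) * e)"
    using k by (intro mult_right_mono) auto
  then have "r \<le> real m * exp ((a - 1) * e)" using rk by linarith
  then have "ln r \<le> ln (real m * exp ((a - 1) * e))" using r by simp
  also have "\<dots> = ln (real m) + (a - 1) * e" using kp k by (subst ln_mult) auto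
  finally have "ln r / (a - 1) \<le> (ln (real m) + (a - 1) * e) / (a - 1)"
    using a by (intro divide_right_mono) auto
  also have "\<dots> = e + ln (real m) / (a - 1)" using a by (simp add: add_divide_distrib)
  finally have "ln r / (a - 1) \<le> e + ln (real m) / (a - 1)" .
  then show ?thesis using r False by (simp add: renyi_of_moment_def)
qed

lemma size_neighboring:
  assumes "neighboring m X X'"
  shows "size X' = size X + 1 \<or> size X = size X' + 1"
  using assms unfolding neighboring_def by auto

lemma neighbors_exist: "neighboring m {#} {#{}#}"
  unfolding neighboring_def valid_dataset_def by auto

lemma rdp_shift:
  fixes p :: "real \<Rightarrow> real"
  assumes rdp: "\<And>\<alpha> f D D'. \<alpha> > 1 \<Longrightarrow> sensitivity_le m f 2 \<Longrightarrow> neighboring m D D' \<Longrightarrow>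
       renyi_div_dens \<alpha> (additive_out_density p f D) (additive_out_density p f D')
         \<le> ereal (eps_g \<alpha>)"
    and a: "a > 1" and s: "\<bar>s - s'\<bar> \<le> 2"
  shows "(\<integral>\<^sup>+u. renyi_term a (p (u + s)) (p (u + s')) \<partial>lborel) \<le> ennreal (exp ((a - 1) * eps_g a))"
proof -
  define f :: "dataset \<Rightarrow> real" where "f X = (if size X = 0 then - s else - s')" for X
  have sens: "sensitivity_le m f 2"
    unfolding sensitivity_le_def
  proof (intro allI impI)
    fix X X' assume "neighboring m X X'"
    then have "size X' = size X + 1 \<or> size X = size X' + 1" by (rule size_neighboring)
    then show "\<bar>f X - f X'\<bar> \<le> 2" using s unfolding f_def by (auto simp: abs_minus_commute)
  qed
  have "renyi_div_dens a (additive_out_density p f {#}) (additive_out_density p f {#{}#}) \<le> ereal (eps_g a)"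
    by (rule rdp[OF a sens neighbors_exist])
  moreover have "additive_out_density p f {#} = (\<lambda>u. p (u + s))"
    unfolding additive_out_density_def f_def by simp
  moreover have "additive_out_density p f {#{}#} = (\<lambda>u. p (u + s'))"
    unfolding additive_out_density_def f_def by simp
  ultimately have "renyi_of_moment a (\<integral>\<^sup>+u. renyi_term a (p (u + s)) (p (u + s')) \<partial>lborel) \<le> ereal (eps_g a)"
    unfolding renyi_div_dens_def by simp
  then show ?thesis by (rule moment_bound[OF a])
qed

lemma eps_nonneg:
  fixes p :: "real \<Rightarrow> real"
  assumes rdp: "\<And>\<alpha> f D D'. \<alpha> > 1 \<Longrightarrow> sensitivity_le m f 2 \<Longrightarrow> neighboring m D D' \<Longrightarrow>
       renyi_div_dens \<alpha> (additive_out_density p f D) (additive_out_density p f D')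
         \<le> ereal (eps_g \<alpha>)"
    and p_nonneg: "\<And>x. p x \<ge> 0"
    and p_int: "(\<integral>\<^sup>+ x. ennreal (p x) \<partial>lborel) = 1"
    and a: "a > 1"
  shows "eps_g a \<ge> 0"
proof -
  have sens: "sensitivity_le m (\<lambda>_. 0) 2" unfolding sensitivity_le_def by simp
  have "renyi_div_dens a (additive_out_density p (\<lambda>_. 0) {#}) (additive_out_density p (\<lambda>_. 0) {#{}#}) \<le> ereal (eps_g a)"
    by (rule rdp[OF a sens neighbors_exist])
  moreover have "additive_out_density p (\<lambda>_. 0) X = p" for X
    unfolding additive_out_density_def by simp
  moreover have "renyi_term a (p x) (p x) = ennreal (p x)" for x
    using p_nonneg[of x] by (cases "p x = 0") (auto simp: renyi_term_def)
  ultimately have "renyi_of_moment a 1 \<le> ereal (eps_g a)"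
    unfolding renyi_div_dens_def using p_int by simp
  then show ?thesis by (simp add: renyi_of_moment_def)
qed

lemma argmax_char:
  fixes v :: "nat \<Rightarrow> real"
  assumes j: "j < k"
  shows "argmax_idx k v = j \<longleftrightarrow> (\<forall>i<k. v i \<le> v j) \<and> (\<forall>i<j. v i < v j)"
proof -
  define P where "P j' = (j' < k \<and> (\<forall>i<k. v i \<le> v j'))" for j'
  have ex: "\<exists>j'. P j'"
  proof -
    have fin: "finite (v ` {..<k})" and ne: "v ` {..<k} \<noteq> {}" using j by auto
    obtain j' where "j' < k" "v j' = Max (v ` {..<k})"
      using Max_in[OF fin ne] by auto
    then have "P j'" unfolding P_def using fin by auto
    then show ?thesis ..
  qed
  have am: "argmax_idx k v = (LEAST j'. P j')" unfolding argmax_idx_def P_def by simp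
  show ?thesis
  proof
    assume "argmax_idx k v = j"
    then have lj: "(LEAST j'. P j') = j" using am by simp
    have Pj: "P j" using LeastI_ex[OF ex] lj by simp
    have "v i < v j" if "i < j" for i
    proof -
      have "\<not> P i" using not_less_Least[of i P] that lj by simp
      moreover have "i < k" using that j by simp
      ultimately obtain i' where "i' < k" "v i' > v i" unfolding P_def using that j by auto
      then show ?thesis using Pj unfolding P_def by fastforce
    qed
    then show "(\<forall>i<k. v i \<le> v j) \<and> (\<forall>i<j. v i < v j)" using Pj unfolding P_def by auto
  next
    assume h: "(\<forall>i<k. v i \<le> v j) \<and> (\<forall>i<j. v i < v j)"
    have "(LEAST j'. P j') = j"
    proof (rule Least_equality)
      show "P j" using h j unfolding P_def by auto
      fix y assume "P y"
      show "j \<le> y"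
      proof (rule ccontr)
        assume "\<not> j \<le> y"
        then have "y < j" by simp
        then have "v y < v j" using h by auto
        moreover have "v j \<le> v y" using \<open>P y\<close> j unfolding P_def by auto
        ultimately show False by simp
      qed
    qed
    then show "argmax_idx k v = j" using am by simp
  qed
qed

lemma Max_diff_le:
  fixes f g :: "nat \<Rightarrow> real"
  assumes "finite I" "I \<noteq> {}" "\<And>i. i \<in> I \<Longrightarrow> f i \<le> g i + 1"
  shows "Max (f ` I) \<le> Max (g ` I) + 1"
proof -
  have "Max (f ` I) \<in> f ` I" using assms by (intro Max_in) auto
  then obtain i0 where "i0 \<in> I" "Max (f ` I) = f i0" by auto
  moreover have "g i0 \<le> Max (g ` I)" using assms \<open>i0 \<in> I\<close> by auto
  ultimately show ?thesis using assms(3)[of i0] by simp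
qed

lemma prob_space_dens:
  fixes p :: "real \<Rightarrow> real"
  assumes p_meas: "p \<in> borel_measurable borel" and p_int: "(\<integral>\<^sup>+ x. ennreal (p x) \<partial>lborel) = 1"
  shows "prob_space (density lborel (\<lambda>x. ennreal (p x)))"
proof (rule prob_spaceI)
  have [measurable]: "p \<in> borel_measurable borel" by (rule p_meas)
  show "emeasure (density lborel (\<lambda>x. ennreal (p x))) (space (density lborel (\<lambda>x. ennreal (p x)))) = 1"
    using p_int by (subst emeasure_density) auto
qed

lemma shift_int:
  fixes p :: "real \<Rightarrow> real"
  assumes p_meas: "p \<in> borel_measurable borel"
  shows "(\<integral>\<^sup>+y. indicator {t..} y \<partial>density lborel (\<lambda>x. ennreal (p x)))
           = (\<integral>\<^sup>+u. ennreal (p (u + t) * indicator {0<..} u) \<partial>lborel)"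
    and "(\<integral>\<^sup>+y. indicator {t<..} y \<partial>density lborel (\<lambda>x. ennreal (p x)))
           = (\<integral>\<^sup>+u. ennreal (p (u + t) * indicator {0<..} u) \<partial>lborel)"
proof -
  have [measurable]: "p \<in> borel_measurable borel" by (rule p_meas)
  have e2: "(\<integral>\<^sup>+y. indicator {t<..} y \<partial>density lborel (\<lambda>x. ennreal (p x)))
           = (\<integral>\<^sup>+u. ennreal (p (u + t) * indicator {0<..} u) \<partial>lborel)"
  proof -
    have "(\<integral>\<^sup>+y. indicator {t<..} y \<partial>density lborel (\<lambda>x. ennreal (p x)))
        = (\<integral>\<^sup>+y. ennreal (p y) * indicator {t<..} y \<partial>lborel)"
      by (subst nn_integral_density) auto
    also have "\<dots> = ennreal \<bar>1::real\<bar> * (\<integral>\<^sup>+u. ennreal (p (t + 1 * u)) * indicator {t<..} (t + 1 * u) \<partial>lborel)"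
      by (rule nn_integral_real_affine) auto
    also have "\<dots> = (\<integral>\<^sup>+u. ennreal (p (u + t) * indicator {0<..} u) \<partial>lborel)"
      by (simp only: abs_one ennreal_1 mult_1 mult_1_left, intro nn_integral_cong) (auto simp: indicator_def add.commute)
    finally show ?thesis .
  qed
  show "(\<integral>\<^sup>+y. indicator {t<..} y \<partial>density lborel (\<lambda>x. ennreal (p x)))
           = (\<integral>\<^sup>+u. ennreal (p (u + t) * indicator {0<..} u) \<partial>lborel)" by (rule e2)
  have "(\<integral>\<^sup>+y. indicator {t..} y \<partial>density lborel (\<lambda>x. ennreal (p x)))
        = (\<integral>\<^sup>+y. ennreal (p y) * indicator {t..} y \<partial>lborel)"
    by (subst nn_integral_density) auto
  also have "\<dots> = (\<integral>\<^sup>+y. ennreal (p y) * indicator {t<..} y \<partial>lborel)"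
    by (intro nn_integral_cong_AE eventually_mono[OF AE_lborel_singleton[of t]]) (auto simp: indicator_def)
  also have "\<dots> = (\<integral>\<^sup>+y. indicator {t<..} y \<partial>density lborel (\<lambda>x. ennreal (p x)))"
    by (subst nn_integral_density) auto
  finally show "(\<integral>\<^sup>+y. indicator {t..} y \<partial>density lborel (\<lambda>x. ennreal (p x)))
           = (\<integral>\<^sup>+u. ennreal (p (u + t) * indicator {0<..} u) \<partial>lborel)" using e2 by simp
qed

lemma renyi_term_ind:
  assumes "x \<ge> 0" "y \<ge> 0"
  shows "renyi_term a (x * indicator A u) (y * indicator A u) \<le> renyi_term a x y"
  using assms by (cases "u \<in> A") (auto simp: renyi_term_def)

lemma per_j:
  fixes p :: "real \<Rightarrow> real" and c c' :: "nat \<Rightarrow> real"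
  assumes a: "a > 1" and p_meas: "p \<in> borel_measurable borel"
    and p_nonneg: "\<And>x. p x \<ge> 0"
    and p_int: "(\<integral>\<^sup>+ x. ennreal (p x) \<partial>lborel) = 1"
    and H: "\<And>s s'. \<bar>s - s'\<bar> \<le> 2 \<Longrightarrow> (\<integral>\<^sup>+u. renyi_term a (p (u + s)) (p (u + s')) \<partial>lborel) \<le> ennreal B"
    and cc: "\<And>i. i < k \<Longrightarrow> \<bar>c i - c' i\<bar> \<le> 1"
    and j: "j < k" and k2: "2 \<le> k"
  shows "renyi_term a (measure (noise k p) {z \<in> space (noise k p). argmax_idx k (\<lambda>i. c i + z i) = j})
                      (measure (noise k p) {z \<in> space (noise k p). argmax_idx k (\<lambda>i. c' i + z i) = j})
         \<le> ennreal B"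
proof -
  have [measurable]: "p \<in> borel_measurable borel" by (rule p_meas)
  define N where "N = density lborel (\<lambda>x. ennreal (p x))"
  have probN: "prob_space N" unfolding N_def by (rule prob_space_dens[OF p_meas p_int])
  interpret PP: product_prob_space "\<lambda>_. N" by (rule product_prob_spaceI) (rule probN)
  have setsN: "sets N = sets borel" unfolding N_def by simp
  have spaceN: "space N = UNIV" unfolding N_def by simp
  define I where "I = {..<k} - {j}"
  have finI: "finite I" and jI: "j \<notin> I" and insI: "insert j I = {..<k}" using j unfolding I_def by auto
  have "(if j = 0 then 1 else 0) \<in> I" using j k2 unfolding I_def by auto
  then have neI: "I \<noteq> {}" by auto
  have noiseeq: "noise k p = PiM (insert j I) (\<lambda>_. N)" unfolding noise_def N_def insI ..
  define M1 where "M1 = PiM I (\<lambda>_. N)"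
  interpret PI: prob_space M1 unfolding M1_def by (rule prob_space_PiM) (rule probN)
  interpret PN: prob_space "noise k p" unfolding noiseeq by (rule prob_space_PiM) (rule probN)
  have comp_meas: "(\<lambda>x. x i) \<in> borel_measurable (PiM J (\<lambda>_. N))" if "i \<in> J" for i J
  proof -
    have "(\<lambda>x. x i) \<in> PiM J (\<lambda>_. N) \<rightarrow>\<^sub>M N" by (rule measurable_component_singleton[OF that])
    then show ?thesis using measurable_cong_sets[OF refl setsN] by blast
  qed
  define T where "T cc x = Max ((\<lambda>i. cc i + x i) ` I) - cc j" for cc :: "nat \<Rightarrow> real" and x :: "nat \<Rightarrow> real"
  have T_meas[measurable]: "T cc \<in> borel_measurable M1" for cc
    unfolding T_def M1_def
    by (intro borel_measurable_diff borel_measurable_Max finI borel_measurable_add comp_meas) auto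
  define E where "E cc = {z \<in> space (noise k p). argmax_idx k (\<lambda>i. cc i + z i) = j}" for cc
  have E_alt: "E cc = {z \<in> space (PiM (insert j I) (\<lambda>_. N)). (\<forall>i\<in>insert j I. cc i + z i \<le> cc j + z j) \<and> (\<forall>i\<in>{..<j}. cc i + z i < cc j + z j)}" for cc
    unfolding E_def noiseeq using argmax_char[OF j] insI by auto
  have E_sets: "E cc \<in> sets (PiM (insert j I) (\<lambda>_. N))" for cc
  proof -
    have jj: "j \<in> insert j I" by simp
    have ij: "i \<in> insert j I" if "i \<in> {..<j}" for i using that j insI by auto
    have cm: "(\<lambda>z. cc i + z i) \<in> borel_measurable (PiM (insert j I) (\<lambda>_. N))" if "i \<in> insert j I" for i
      by (intro borel_measurable_add borel_measurable_const comp_meas that)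
    show ?thesis unfolding E_alt
    proof (intro sets.sets_Collect_conj)
      show "{z \<in> space (PiM (insert j I) (\<lambda>_. N)). \<forall>i\<in>insert j I. cc i + z i \<le> cc j + z j} \<in> sets (PiM (insert j I) (\<lambda>_. N))"
        by (intro sets.sets_Collect_finite_All borel_measurable_le cm jj) (auto simp: finI)
      show "{z \<in> space (PiM (insert j I) (\<lambda>_. N)). \<forall>i\<in>{..<j}. cc i + z i < cc j + z j} \<in> sets (PiM (insert j I) (\<lambda>_. N))"
        by (intro sets.sets_Collect_finite_All borel_measurable_less cm jj ij) auto
    qed
  qed
  have iter: "emeasure (noise k p) (E cc) = (\<integral>\<^sup>+x. \<integral>\<^sup>+y. indicator (E cc) (x(j:=y)) \<partial>N \<partial>M1)" for cc
  proof -
    have "emeasure (noise k p) (E cc) = (\<integral>\<^sup>+z. indicator (E cc) z \<partial>PiM (insert j I) (\<lambda>_. N))"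
      using E_sets noiseeq by simp
    also have "\<dots> = (\<integral>\<^sup>+x. \<integral>\<^sup>+y. indicator (E cc) (x(j:=y)) \<partial>N \<partial>M1)"
      unfolding M1_def by (rule PP.product_nn_integral_insert[OF finI jI]) (rule borel_measurable_indicator[OF E_sets])
    finally show ?thesis .
  qed
  have upd_space: "x(j:=y) \<in> space (noise k p)" if "x \<in> space M1" for x y
    using that unfolding noiseeq M1_def space_PiM spaceN by (intro PiE_fun_upd) auto
  have up: "indicator (E cc) (x(j:=y)) \<le> (indicator {T cc x..} y :: ennreal)" if x: "x \<in> space M1" for cc x y
  proof (cases "x(j:=y) \<in> E cc")
    case True
    then have "argmax_idx k (\<lambda>i. cc i + (x(j:=y)) i) = j" unfolding E_def by simp
    then have "(\<forall>i<k. cc i + (x(j:=y)) i \<le> cc j + (x(j:=y)) j) \<and> (\<forall>i<j. cc i + (x(j:=y)) i < cc j + (x(j:=y)) j)"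
      using argmax_char[OF j, of "\<lambda>i. cc i + (x(j:=y)) i"] by (simp only:)
    then have h: "\<forall>i<k. cc i + (x(j:=y)) i \<le> cc j + (x(j:=y)) j" by (rule conjunct1)
    have "\<forall>i\<in>I. cc i + x i \<le> cc j + y"
    proof
      fix i assume "i \<in> I"
      then have "i < k" "i \<noteq> j" unfolding I_def by auto
      then show "cc i + x i \<le> cc j + y" using h by auto
    qed
    then have "Max ((\<lambda>i. cc i + x i) ` I) \<le> cc j + y" using finI neI by simp
    then have "y \<in> {T cc x..}" unfolding T_def by simp
    then show ?thesis using True by simp
  qed simp
  have low: "(indicator {T cc x<..} y :: ennreal) \<le> indicator (E cc) (x(j:=y))" if x: "x \<in> space M1" for cc x y
  proof (cases "y \<in> {T cc x<..}")
    case True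
    then have lt: "Max ((\<lambda>i. cc i + x i) ` I) < cc j + y" unfolding T_def by simp
    have "\<forall>i<k. cc i + (x(j:=y)) i \<le> cc j + (x(j:=y)) j"
    proof (intro allI impI)
      fix i assume "i < k"
      show "cc i + (x(j:=y)) i \<le> cc j + (x(j:=y)) j"
      proof (cases "i = j")
        case False
        then have "i \<in> I" using \<open>i < k\<close> unfolding I_def by auto
        then have "cc i + x i \<le> Max ((\<lambda>i. cc i + x i) ` I)" using finI by simp
        then show ?thesis using lt False by simp
      qed simp
    qed
    moreover have "\<forall>i<j. cc i + (x(j:=y)) i < cc j + (x(j:=y)) j"
    proof (intro allI impI)
      fix i assume "i < j"
      then have "i \<in> I" "i \<noteq> j" using j unfolding I_def by auto
      then have "cc i + x i \<le> Max ((\<lambda>i. cc i + x i) ` I)" using finI by simp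
      then show "cc i + (x(j:=y)) i < cc j + (x(j:=y)) j" using lt \<open>i \<noteq> j\<close> by simp
    qed
    ultimately have "(\<forall>i<k. cc i + (x(j:=y)) i \<le> cc j + (x(j:=y)) j) \<and> (\<forall>i<j. cc i + (x(j:=y)) i < cc j + (x(j:=y)) j)"
      by (rule conjI)
    then have "argmax_idx k (\<lambda>i. cc i + (x(j:=y)) i) = j"
      using argmax_char[OF j, of "\<lambda>i. cc i + (x(j:=y)) i"] by (simp only:)
    then have "x(j:=y) \<in> E cc" unfolding E_def using upd_space[OF x] by simp
    then show ?thesis using True by simp
  qed simp
  define f where "f cc z = p (snd z + T cc (fst z)) * indicator {0<..} (snd z)" for cc z
  have f_meas[measurable]: "f cc \<in> borel_measurable (M1 \<Otimes>\<^sub>M lborel)" for cc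
    unfolding f_def by measurable
  have f_nn: "f cc z \<ge> 0" for cc z unfolding f_def using p_nonneg by simp
  have inner1: "(\<integral>\<^sup>+y. indicator {T cc x..} y \<partial>N) = (\<integral>\<^sup>+u. ennreal (f cc (x, u)) \<partial>lborel)" for cc x
    unfolding N_def f_def using shift_int(1)[OF p_meas, of "T cc x"] by simp
  have inner2: "(\<integral>\<^sup>+y. indicator {T cc x<..} y \<partial>N) = (\<integral>\<^sup>+u. ennreal (f cc (x, u)) \<partial>lborel)" for cc x
    unfolding N_def f_def using shift_int(2)[OF p_meas, of "T cc x"] by simp
  have fub: "(\<integral>\<^sup>+x. \<integral>\<^sup>+u. ennreal (f cc (x, u)) \<partial>lborel \<partial>M1) = (\<integral>\<^sup>+z. ennreal (f cc z) \<partial>(M1 \<Otimes>\<^sub>M lborel))" for cc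
    by (rule lborel.nn_integral_fst) measurable
  have Pup: "emeasure (noise k p) (E c) \<le> (\<integral>\<^sup>+z. ennreal (f c z) \<partial>(M1 \<Otimes>\<^sub>M lborel))"
  proof -
    have "emeasure (noise k p) (E c) \<le> (\<integral>\<^sup>+x. \<integral>\<^sup>+y. indicator {T c x..} y \<partial>N \<partial>M1)"
      unfolding iter by (intro nn_integral_mono) (use up in auto)
    then show ?thesis unfolding inner1 fub .
  qed
  have Qlow: "(\<integral>\<^sup>+z. ennreal (f c' z) \<partial>(M1 \<Otimes>\<^sub>M lborel)) \<le> emeasure (noise k p) (E c')"
  proof -
    have "(\<integral>\<^sup>+x. \<integral>\<^sup>+y. indicator {T c' x<..} y \<partial>N \<partial>M1) \<le> emeasure (noise k p) (E c')"
      unfolding iter by (intro nn_integral_mono) (use low in auto)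
    then show ?thesis unfolding inner2 fub .
  qed
  have fin: "(\<integral>\<^sup>+z. ennreal (f cc z) \<partial>(M1 \<Otimes>\<^sub>M lborel)) < \<infinity>" for cc
  proof -
    have "(\<integral>\<^sup>+x. \<integral>\<^sup>+y. indicator {T cc x<..} y \<partial>N \<partial>M1) \<le> (\<integral>\<^sup>+x. 1 \<partial>M1)"
    proof (intro nn_integral_mono)
      fix x
      have "{T cc x<..} \<in> sets N" using setsN by simp
      then have "(\<integral>\<^sup>+y. indicator {T cc x<..} y \<partial>N) = emeasure N {T cc x<..}" by simp
      also have "\<dots> \<le> 1" by (rule prob_space.emeasure_le_1[OF probN])
      finally show "(\<integral>\<^sup>+y. indicator {T cc x<..} y \<partial>N) \<le> 1" .
    qed
    also have "\<dots> = 1" by (simp add: PI.emeasure_space_1)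
    finally have "(\<integral>\<^sup>+z. ennreal (f cc z) \<partial>(M1 \<Otimes>\<^sub>M lborel)) \<le> 1" unfolding inner2 fub .
    moreover have "(1::ennreal) < \<infinity>" by simp
    ultimately show ?thesis by (rule le_less_trans)
  qed
  have K: "renyi_term a (enn2real (\<integral>\<^sup>+z. ennreal (f c z) \<partial>(M1 \<Otimes>\<^sub>M lborel))) (enn2real (\<integral>\<^sup>+z. ennreal (f c' z) \<partial>(M1 \<Otimes>\<^sub>M lborel)))
      \<le> (\<integral>\<^sup>+z. renyi_term a (f c z) (f c' z) \<partial>(M1 \<Otimes>\<^sub>M lborel))"
    by (rule renyi_integral_lower[OF a f_meas f_meas f_nn f_nn fin fin])
  have Tdiff: "\<bar>T c x - T c' x\<bar> \<le> 2" for x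
  proof -
    have c1: "c i + x i \<le> (c' i + x i) + 1" if "i \<in> I" for i using cc[of i] that unfolding I_def by auto
    have c2: "c' i + x i \<le> (c i + x i) + 1" if "i \<in> I" for i using cc[of i] that unfolding I_def by auto
    have "Max ((\<lambda>i. c i + x i) ` I) \<le> Max ((\<lambda>i. c' i + x i) ` I) + 1"
      by (rule Max_diff_le[OF finI neI c1])
    moreover have "Max ((\<lambda>i. c' i + x i) ` I) \<le> Max ((\<lambda>i. c i + x i) ` I) + 1"
      by (rule Max_diff_le[OF finI neI c2])
    moreover have "\<bar>c j - c' j\<bar> \<le> 1" using cc j by simp
    ultimately show ?thesis unfolding T_def by (simp add: abs_le_iff)
  qed
  have R: "(\<integral>\<^sup>+z. renyi_term a (f c z) (f c' z) \<partial>(M1 \<Otimes>\<^sub>M lborel)) \<le> ennreal B"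
  proof -
    have "(\<integral>\<^sup>+z. renyi_term a (f c z) (f c' z) \<partial>(M1 \<Otimes>\<^sub>M lborel))
        = (\<integral>\<^sup>+x. \<integral>\<^sup>+u. renyi_term a (f c (x, u)) (f c' (x, u)) \<partial>lborel \<partial>M1)"
      by (rule lborel.nn_integral_fst[symmetric]) measurable
    also have "\<dots> \<le> (\<integral>\<^sup>+x. \<integral>\<^sup>+u. renyi_term a (p (u + T c x)) (p (u + T c' x)) \<partial>lborel \<partial>M1)"
      unfolding f_def using p_nonneg
      by (intro nn_integral_mono) (simp add: renyi_term_ind)
    also have "\<dots> \<le> (\<integral>\<^sup>+x. ennreal B \<partial>M1)"
      by (intro nn_integral_mono H Tdiff)
    also have "\<dots> = ennreal B" by (simp add: PI.emeasure_space_1)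
    finally show ?thesis .
  qed
  have m1: "measure (noise k p) (E c) \<le> enn2real (\<integral>\<^sup>+z. ennreal (f c z) \<partial>(M1 \<Otimes>\<^sub>M lborel))"
    unfolding measure_def by (rule enn2real_mono[OF Pup]) (use fin[of c] in simp)
  have m2: "enn2real (\<integral>\<^sup>+z. ennreal (f c' z) \<partial>(M1 \<Otimes>\<^sub>M lborel)) \<le> measure (noise k p) (E c')"
    unfolding measure_def by (rule enn2real_mono[OF Qlow]) (simp add: PN.emeasure_finite less_top[symmetric])
  have "renyi_term a (measure (noise k p) (E c)) (measure (noise k p) (E c'))
     \<le> renyi_term a (enn2real (\<integral>\<^sup>+z. ennreal (f c z) \<partial>(M1 \<Otimes>\<^sub>M lborel))) (enn2real (\<integral>\<^sup>+z. ennreal (f c' z) \<partial>(M1 \<Otimes>\<^sub>M lborel)))"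
    by (rule renyi_term_mono[OF a _ m1 _ m2]) auto
  also note K
  also note R
  finally show ?thesis unfolding E_def .
qed

theorem mainTheorem2:
  fixes m :: nat and p :: "real \<Rightarrow> real" and eps_g :: "real \<Rightarrow> real"
  assumes m2: "m \<ge> 2"
    and p_meas: "p \<in> borel_measurable borel"
    and p_nonneg: "\<And>x. p x \<ge> 0"
    and p_int: "(\<integral>\<^sup>+ x. ennreal (p x) \<partial>lborel) = 1"
    and rdp: "\<And>\<alpha> f D D'. \<alpha> > 1 \<Longrightarrow> sensitivity_le m f 2 \<Longrightarrow> neighboring m D D' \<Longrightarrow>
       renyi_div_dens \<alpha> (additive_out_density p f D) (additive_out_density p f D')
         \<le> ereal (eps_g \<alpha>)"
  shows "\<forall>D D' \<alpha>. neighboring m D D' \<and> \<alpha> > 1 \<longrightarrow>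
     renyi_div_disc \<alpha> (m - 1) (rnm_gap_prob m p D) (rnm_gap_prob m p D')
       \<le> ereal (eps_g \<alpha> + ln (real m) / (\<alpha> - 1))"
proof (intro allI impI, elim conjE)
  fix D D' and a :: real
  assume nb: "neighboring m D D'" and a: "a > 1"
  define k where "k = m - 1"
  define B where "B = exp ((a - 1) * eps_g a)"
  have H: "\<And>s s'. \<bar>s - s'\<bar> \<le> 2 \<Longrightarrow> (\<integral>\<^sup>+u. renyi_term a (p (u + s)) (p (u + s')) \<partial>lborel) \<le> ennreal B"
    unfolding B_def by (rule rdp_shift[OF rdp a]) auto
  have eps0: "eps_g a \<ge> 0" by (rule eps_nonneg[OF rdp p_nonneg p_int a])
  have B1: "B \<ge> 1" unfolding B_def using a eps0 by simp
  have bound: "renyi_term a (rnm_gap_prob m p D j) (rnm_gap_prob m p D' j) \<le> ennreal B" if j: "j < k" for j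
  proof (cases "k \<ge> 2")
    case True
    have cc: "\<bar>gap m D i - gap m D' i\<bar> \<le> 1" if "i < k" for i
      using gap_sens[OF nb] that unfolding k_def by simp
    show ?thesis unfolding rnm_gap_prob_def k_def[symmetric]
      by (rule per_j[OF a p_meas p_nonneg p_int H cc j True])
  next
    case False
    then have k1: "k = 1" using m2 unfolding k_def by simp
    then have j0: "j = 0" using j by simp
    have probN: "prob_space (density lborel (\<lambda>x. ennreal (p x)))" by (rule prob_space_dens[OF p_meas p_int])
    interpret PN: prob_space "noise k p" unfolding noise_def by (rule prob_space_PiM) (rule probN)
    have one: "rnm_gap_prob m p X j = 1" for X
    proof -
      have "argmax_idx k v = j" for v :: "nat \<Rightarrow> real"
        using argmax_char[of j k v] j k1 j0 by simp
      then have "{z \<in> space (noise k p). argmax_idx k (\<lambda>i. gap m X i + z i) = j} = space (noise k p)" by auto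
      then show ?thesis unfolding rnm_gap_prob_def k_def[symmetric] by (simp add: PN.prob_space)
    qed
    show ?thesis unfolding one using B1 by (simp add: renyi_term_def)
  qed
  have "(\<Sum>j<k. renyi_term a (rnm_gap_prob m p D j) (rnm_gap_prob m p D' j)) \<le> (\<Sum>j<k. ennreal B)"
    by (intro sum_mono bound) simp
  also have "\<dots> = ennreal (real k * B)" using B1
    by (simp add: ennreal_mult ennreal_of_nat_eq_real_of_nat)
  finally have S: "(\<Sum>j<k. renyi_term a (rnm_gap_prob m p D j) (rnm_gap_prob m p D' j)) \<le> ennreal (real k * exp ((a - 1) * eps_g a))"
    unfolding B_def .
  have "real k \<le> real m" unfolding k_def by simp
  then show "renyi_div_disc a (m - 1) (rnm_gap_prob m p D) (rnm_gap_prob m p D')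
       \<le> ereal (eps_g a + ln (real m) / (a - 1))"
    unfolding renyi_div_disc_def k_def[symmetric] by (rule moment_final[OF a _ S])
qed

end
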